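(* Let $Q$ be a quantity space over a field $K$ with a basis $E=\{e_1,\ldots,e_n\}$. Then: (1) $\mu_E(xy)=\mu_E(x)\mu_E(y)$ for all $x,y\in Q$; (2) for all $x\in Q$ with $\mu_E(x)\neq0$, $x^{-1}$ exists and $\mu_E(x^{-1})=\mu_E(x)^{-1}$; (3) $\mu_E(\lambda\cdot x)=\lambda\,\mu_E(x)$ for all $\lambda\in K$, $x\in Q$; (4) $\mu_E(x+y)=\mu_E(x)+\mu_E(y)$ for all $x,y\in Q$ with $x\sim y$.
   Context: A scalable monoid over a (unital, associative) ring $R$ is a monoid $X$ (identity $1_X$, product written $xy$) together with a map $R\times X\to X$, $(\alpha,x)\mapsto\alpha\cdot x$, such that $1\cdot x=x$, $\alpha\cdot(\beta\cdot x)=\alpha\beta\cdot x$ and $\alpha\cdot(xy)=(\alpha\cdot x)y=x(\alpha\cdot y)$. A quantity space over a field $K$ is a commutative scalable monoid $Q$ over $K$ for which there exists a basis, i.e. a finite set $\{e_1,\ldots,e_n\}$ of invertible elements of $Q$ such that every $x\in Q$ has a unique expansion $x=\mu\cdot\prod_{i=1}^n e_i^{k_i}$ with $\mu\in K$ and $k_i\in\mathbb{Z}$; the scalar $\mu$ in this expansion is the measure $\mu_E(x)$ of $x$ relative to $E$. On $Q$, $x\sim y$ iff $\alpha\cdot x=\beta\cdot y$ for some $\alpha,\beta\in K$. A unit element for a class $\mathsf{C}$ of $\sim$ is some $u\in\mathsf{C}$ such that every $x\in\mathsf{C}$ equals $\lambda\cdot u$ for some $\lambda\in K$ and $\lambda\cdot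 u=\lambda'\cdot u$ implies $\lambda=\lambda'$. For $x\sim y$, with $u$ a unit element for their class, $x=\rho\cdot u$, $y=\sigma\cdot u$, the sum is $x+y:=(\rho+\sigma)\cdot u$ (independent of $u$). *)

theory Defs
  imports Main
begin

definition scalable_monoid ::
  "('q \<Rightarrow> 'q \<Rightarrow> 'q) \<Rightarrow> 'q \<Rightarrow> ('k::ring_1 \<Rightarrow> 'q \<Rightarrow> 'q) \<Rightarrow> bool" where
  "scalable_monoid mult one smult \<longleftrightarrow>
     (\<forall>x y z. mult (mult x y) z = mult x (mult y z)) \<and>
     (\<forall>x. mult one x = x) \<and> (\<forall>x. mult x one = x) \<and>
     (\<forall>x. smult 1 x = x) \<and>
     (\<forall>a b x. smult a (smult b x) = smult (a * b) x) \<and>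
     (\<forall>a x y. smult a (mult x y) = mult (smult a x) y \<and>
              smult a (mult x y) = mult x (smult a y))"

definition q_invertible :: "('q \<Rightarrow> 'q \<Rightarrow> 'q) \<Rightarrow> 'q \<Rightarrow> 'q \<Rightarrow> bool" where
  "q_invertible mult one x \<longleftrightarrow> (\<exists>y. mult x y = one \<and> mult y x = one)"

definition q_inv :: "('q \<Rightarrow> 'q \<Rightarrow> 'q) \<Rightarrow> 'q \<Rightarrow> 'q \<Rightarrow> 'q" where
  "q_inv mult one x = (THE y. mult x y = one \<and> mult y x = one)"

definition q_pow :: "('q \<Rightarrow> 'q \<Rightarrow> 'q) \<Rightarrow> 'q \<Rightarrow> 'q \<Rightarrow> nat \<Rightarrow> 'q" where
  "q_pow mult one x n = ((mult x) ^^ n) one"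

text \<open>Integer powers (meaningful for invertible elements).\<close>
definition q_zpow :: "('q \<Rightarrow> 'q \<Rightarrow> 'q) \<Rightarrow> 'q \<Rightarrow> 'q \<Rightarrow> int \<Rightarrow> 'q" where
  "q_zpow mult one x k =
     (if 0 \<le> k then q_pow mult one x (nat k)
      else q_pow mult one (q_inv mult one x) (nat (- k)))"

definition q_monomial :: "('q \<Rightarrow> 'q \<Rightarrow> 'q) \<Rightarrow> 'q \<Rightarrow> 'q list \<Rightarrow> int list \<Rightarrow> 'q" where
  "q_monomial mult one es ks =
     foldr (\<lambda>(e, k) acc. mult (q_zpow mult one e k) acc) (zip es ks) one"

definition is_basis ::
  "('q \<Rightarrow> 'q \<Rightarrow> 'q) \<Rightarrow> 'q \<Rightarrow> ('k \<Rightarrow> 'q \<Rightarrow> 'q) \<Rightarrow> 'q list \<Rightarrow> bool" where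
  "is_basis mult one smult es \<longleftrightarrow>
     distinct es \<and> (\<forall>e\<in>set es. q_invertible mult one e) \<and>
     (\<forall>x. \<exists>!(mu, ks). length ks = length es \<and>
             x = smult mu (q_monomial mult one es ks))"

definition quantity_space ::
  "('q \<Rightarrow> 'q \<Rightarrow> 'q) \<Rightarrow> 'q \<Rightarrow> ('k::field \<Rightarrow> 'q \<Rightarrow> 'q) \<Rightarrow> bool" where
  "quantity_space mult one smult \<longleftrightarrow>
     scalable_monoid mult one smult \<and> (\<forall>x y. mult x y = mult y x) \<and>
     (\<exists>es. is_basis mult one smult es)"

definition q_measure ::
  "('q \<Rightarrow> 'q \<Rightarrow> 'q) \<Rightarrow> 'q \<Rightarrow> ('k \<Rightarrow> 'q \<Rightarrow> 'q) \<Rightarrow> 'q list \<Rightarrow> 'q \<Rightarrow> 'k" where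
  "q_measure mult one smult es x =
     (THE mu. \<exists>ks. length ks = length es \<and> x = smult mu (q_monomial mult one es ks))"

definition q_sim :: "('k \<Rightarrow> 'q \<Rightarrow> 'q) \<Rightarrow> 'q \<Rightarrow> 'q \<Rightarrow> bool" where
  "q_sim smult x y \<longleftrightarrow> (\<exists>a b. smult a x = smult b y)"

definition unit_element :: "('k \<Rightarrow> 'q \<Rightarrow> 'q) \<Rightarrow> 'q set \<Rightarrow> 'q \<Rightarrow> bool" where
  "unit_element smult C u \<longleftrightarrow>
     u \<in> C \<and> (\<forall>x\<in>C. \<exists>l. x = smult l u) \<and>
     (\<forall>l l'. smult l u = smult l' u \<longrightarrow> l = l')"

definition q_add :: "('k::ring_1 \<Rightarrow> 'q \<Rightarrow> 'q) \<Rightarrow> 'q \<Rightarrow> 'q \<Rightarrow> 'q" where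
  "q_add smult x y =
     (THE z. \<exists>u r s. unit_element smult {w. q_sim smult x w} u \<and>
                    x = smult r u \<and> y = smult s u \<and> z = smult (r + s) u)"

end

theory Submission
  imports Defs
begin

locale qsp =
  fixes mult :: "'q \<Rightarrow> 'q \<Rightarrow> 'q" and one :: 'q and smult :: "'k::field \<Rightarrow> 'q \<Rightarrow> 'q"
    and es :: "'q list"
  assumes assoc: "mult (mult x y) z = mult x (mult y z)"
    and lone: "mult one x = x" and rone: "mult x one = x"
    and comm: "mult x y = mult y x"
    and s1: "smult 1 x = x"
    and ss: "smult a (smult b x) = smult (a * b) x"
    and sl: "smult a (mult x y) = mult (smult a x) y"
    and sr: "smult a (mult x y) = mult x (smult a y)"
    and basis: "is_basis mult one smult es"
begin

lemma inv_unique: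
  assumes "mult x y = one" "mult y x = one" "mult x z = one" shows "z = y"
proof -
  have "z = mult one z" by (simp add: lone)
  also have "\<dots> = mult y (mult x z)" using assms(2) by (simp add: assoc[symmetric])
  also have "\<dots> = y" using assms(3) by (simp add: rone)
  finally show ?thesis .
qed

lemma q_inv_eq:
  assumes "mult x y = one" "mult y x = one" shows "q_inv mult one x = y"
  unfolding q_inv_def
  by (rule the_equality) (use assms inv_unique in auto)

lemma pow_Suc: "q_pow mult one x (Suc n) = mult x (q_pow mult one x n)"
  by (simp add: q_pow_def)

lemma pow_0: "q_pow mult one x 0 = one"
  by (simp add: q_pow_def)

lemma zpow_succ:
  assumes ei: "mult e i = one" "mult i e = one"
  shows "q_zpow mult one e (k+1) = mult e (q_zpow mult one e k)"
proof -
  have qi: "q_inv mult one e = i" using q_inv_eq ei by blast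
  show ?thesis
  proof (cases "k \<ge> 0")
    case True
    then have "nat (k+1) = Suc (nat k)" by simp
    then show ?thesis using True by (simp add: q_zpow_def pow_Suc)
  next
    case False
    show ?thesis
    proof (cases "k = -1")
      case True
      then show ?thesis using ei qi by (simp add: q_zpow_def pow_Suc pow_0 rone)
    next
      case F2: False
      then have k1: "\<not> 0 \<le> k + 1" using False by simp
      have "nat (-k) = Suc (nat (-(k+1)))" using False by simp
      then have "q_zpow mult one e k = mult i (q_zpow mult one e (k+1))"
        using False k1 qi by (simp add: q_zpow_def pow_Suc)
      then show ?thesis using ei by (simp add: assoc[symmetric] lone)
    qed
  qed
qed

lemma zpow_add:
  assumes inv: "q_invertible mult one e"
  shows "mult (q_zpow mult one e k) (q_zpow mult one e l) = q_zpow mult one e (k+l)"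
proof -
  obtain i where ei: "mult e i = one" "mult i e = one" using inv unfolding q_invertible_def by blast
  note S = zpow_succ[OF ei]
  have D: "q_zpow mult one e (j - 1) = mult i (q_zpow mult one e j)" for j
  proof -
    have "q_zpow mult one e j = mult e (q_zpow mult one e (j-1))" using S[of "j-1"] by simp
    then show ?thesis using ei by (simp add: assoc[symmetric] lone)
  qed
  show ?thesis
  proof (induction k rule: int_induct[where k=0])
    case base
    then show ?case by (simp add: q_zpow_def pow_0 lone)
  next
    case (step1 j)
    have "mult (q_zpow mult one e (j+1)) (q_zpow mult one e l)
        = mult e (q_zpow mult one e (j + l))" using S step1(2) by (simp add: assoc)
    also have "\<dots> = q_zpow mult one e (j + l + 1)" using S by simp
    finally show ?case by (simp add: algebra_simps)
  next
    case (step2 j)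
    have "mult (q_zpow mult one e (j-1)) (q_zpow mult one e l)
        = mult i (q_zpow mult one e (j + l))" using D step2(2) by (simp add: assoc)
    also have "\<dots> = q_zpow mult one e (j + l - 1)" using D by simp
    finally show ?case by (simp add: algebra_simps)
  qed
qed

lemma mono_Cons: "q_monomial mult one (e#xs) (k#ks) = mult (q_zpow mult one e k) (q_monomial mult one xs ks)"
  by (simp add: q_monomial_def)

lemma mono_Nil: "q_monomial mult one [] ks = one"
  by (simp add: q_monomial_def)

lemma swap4: "mult (mult a b) (mult c d) = mult (mult a c) (mult b d)"
proof -
  have "mult (mult a b) (mult c d) = mult a (mult (mult b c) d)" by (simp add: assoc)
  also have "\<dots> = mult a (mult (mult c b) d)" by (simp add: comm)
  also have "\<dots> = mult (mult a c) (mult b d)" by (simp add: assoc)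
  finally show ?thesis .
qed

lemma mono_mult:
  "\<forall>e\<in>set xs. q_invertible mult one e \<Longrightarrow> length ks = length xs \<Longrightarrow> length ls = length xs \<Longrightarrow>
   mult (q_monomial mult one xs ks) (q_monomial mult one xs ls) = q_monomial mult one xs (map2 (+) ks ls)"
proof (induction xs arbitrary: ks ls)
  case Nil
  then show ?case by (simp add: mono_Nil lone)
next
  case (Cons e xs)
  then obtain k ks' l ls' where "ks = k#ks'" "ls = l#ls'"
    by (metis length_Suc_conv)
  then show ?case using Cons
    by (simp add: mono_Cons) (metis swap4 zpow_add)
qed

lemma mono_zero: "q_monomial mult one xs (replicate (length xs) 0) = one"
  by (induction xs) (simp_all add: mono_Nil mono_Cons q_zpow_def pow_0 lone)

lemma map2_neg: "map2 (+) ks (map uminus ks) = replicate (length ks) (0::int)"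
  by (induction ks) auto

lemma smult_mult: "mult (smult a x) (smult b y) = smult (a*b) (mult x y)"
  by (metis ss sl sr)

lemma binv: "\<forall>e\<in>set es. q_invertible mult one e"
  using basis unfolding is_basis_def by blast

lemma rep: "\<exists>mu ks. length ks = length es \<and> x = smult mu (q_monomial mult one es ks)"
  using basis unfolding is_basis_def by blast

lemma uniq:
  assumes "length ks = length es" "length ls = length es"
    "smult a (q_monomial mult one es ks) = smult b (q_monomial mult one es ls)"
  shows "a = b \<and> ks = ls"
proof -
  let ?x = "smult a (q_monomial mult one es ks)"
  have "\<exists>!(mu, ks). length ks = length es \<and> ?x = smult mu (q_monomial mult one es ks)"
    using basis unfolding is_basis_def by blast
  then obtain p where p: "\<And>q. (case q of (mu, ks) \<Rightarrow> length ks = length es \<and> ?x = smult mu (q_monomial mult one es ks)) \<Longrightarrow> q = p"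
    unfolding Ex1_def by blast
  have "(a, ks) = p" by (rule p) (use assms in simp)
  moreover have "(b, ls) = p" by (rule p) (use assms in simp)
  ultimately show ?thesis by (metis prod.inject)
qed

lemma meas:
  assumes "length ks = length es"
  shows "q_measure mult one smult es (smult mu (q_monomial mult one es ks)) = mu"
  unfolding q_measure_def
  by (rule the_equality) (use assms uniq in blast)+

lemma part1: "q_measure mult one smult es (mult x y) =
                q_measure mult one smult es x * q_measure mult one smult es y"
proof -
  obtain a ks where x: "length ks = length es" "x = smult a (q_monomial mult one es ks)" using rep by blast
  obtain b ls where y: "length ls = length es" "y = smult b (q_monomial mult one es ls)" using rep by blast
  have "mult x y = smult (a*b) (q_monomial mult one es (map2 (+) ks ls))"
    using x y by (simp add: smult_mult mono_mult binv)
  moreover have "length (map2 (+) ks ls) = length es" using x y by simp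
  ultimately show ?thesis using x y meas by simp
qed

lemma part3: "q_measure mult one smult es (smult l x) = l * q_measure mult one smult es x"
proof -
  obtain a ks where x: "length ks = length es" "x = smult a (q_monomial mult one es ks)" using rep by blast
  then show ?thesis by (simp add: ss meas)
qed

lemma part2:
  assumes "q_measure mult one smult es x \<noteq> 0"
  shows "q_invertible mult one x \<and>
         q_measure mult one smult es (q_inv mult one x) = inverse (q_measure mult one smult es x)"
proof -
  obtain a ks where x: "length ks = length es" "x = smult a (q_monomial mult one es ks)" using rep by blast
  have a: "a \<noteq> 0" using assms x meas by simp
  define y where "y = smult (inverse a) (q_monomial mult one es (map uminus ks))"
  have "mult x y = smult (a * inverse a) (q_monomial mult one es (map2 (+) ks (map uminus ks)))"
    using x by (simp add: y_def smult_mult mono_mult binv)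
  also have "\<dots> = one" using a x by (simp add: map2_neg s1 mono_zero)
  finally have xy: "mult x y = one" .
  then have yx: "mult y x = one" by (simp add: comm)
  have "q_inv mult one x = y" using q_inv_eq xy yx by blast
  moreover have "q_invertible mult one x" using xy yx unfolding q_invertible_def by blast
  ultimately show ?thesis using x meas by (simp add: y_def)
qed

lemma sim_dim:
  assumes "length ks = length es" "length ls = length es"
  shows "q_sim smult (smult a (q_monomial mult one es ks)) (smult b (q_monomial mult one es ls)) \<longleftrightarrow> ks = ls"
proof
  assume "q_sim smult (smult a (q_monomial mult one es ks)) (smult b (q_monomial mult one es ls))"
  then obtain c d where "smult (c*a) (q_monomial mult one es ks) = smult (d*b) (q_monomial mult one es ls)"
    unfolding q_sim_def by (auto simp: ss)
  then show "ks = ls" using uniq assms by blast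
next
  assume "ks = ls"
  then show "q_sim smult (smult a (q_monomial mult one es ks)) (smult b (q_monomial mult one es ls))"
    unfolding q_sim_def by (rule_tac x=0 in exI, rule_tac x=0 in exI) (simp add: ss)
qed

lemma part4:
  assumes "q_sim smult x y"
  shows "q_measure mult one smult es (q_add smult x y) =
           q_measure mult one smult es x + q_measure mult one smult es y"
proof -
  obtain a ks where x: "length ks = length es" "x = smult a (q_monomial mult one es ks)" using rep by blast
  obtain b ls where y: "length ls = length es" "y = smult b (q_monomial mult one es ls)" using rep by blast
  have kl: "ks = ls" using assms x y sim_dim by blast
  let ?m = "q_monomial mult one es ks"
  let ?C = "{w. q_sim smult x w}"
  have Cchar: "w \<in> ?C \<longleftrightarrow> (\<exists>c. w = smult c ?m)" for w
  proof -
    obtain c ms where w: "length ms = length es" "w = smult c (q_monomial mult one es ms)" using rep by blast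
    show ?thesis
    proof
      assume "w \<in> ?C"
      then have "ms = ks" using sim_dim x w by simp
      then show "\<exists>c. w = smult c ?m" using w by blast
    next
      assume "\<exists>c. w = smult c ?m"
      then obtain c' where "w = smult c' ?m" by blast
      then show "w \<in> ?C" using sim_dim x by simp
    qed
  qed
  have ue: "unit_element smult ?C ?m"
    unfolding unit_element_def
  proof (intro conjI ballI allI impI)
    show "?m \<in> ?C" using Cchar by (metis s1)
  next
    fix w assume "w \<in> ?C" then show "\<exists>l. w = smult l ?m" using Cchar by blast
  next
    fix l l' assume "smult l ?m = smult l' ?m" then show "l = l'" using uniq x by blast
  qed
  have "q_add smult x y = smult (a + b) ?m"
    unfolding q_add_def
  proof (rule the_equality)
    show "\<exists>u r s. unit_element smult ?C u \<and> x = smult r u \<and> y = smult s u \<and> smult (a + b) ?m = smult (r + s) u"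
      using ue x y kl by blast
  next
    fix z assume "\<exists>u r s. unit_element smult ?C u \<and> x = smult r u \<and> y = smult s u \<and> z = smult (r + s) u"
    then obtain u r s where u: "unit_element smult ?C u" "x = smult r u" "y = smult s u" "z = smult (r + s) u" by blast
    then have "u \<in> ?C" unfolding unit_element_def by blast
    then obtain c where c: "u = smult c ?m" using Cchar by blast
    have "smult a ?m = smult (r*c) ?m" using u(2) c x by (simp add: ss)
    then have "a = r*c" using uniq x by blast
    moreover have "smult b ?m = smult (s*c) ?m" using u(3) c y kl by (simp add: ss)
    then have "b = s*c" using uniq x by blast
    ultimately show "z = smult (a + b) ?m" using u(4) c by (simp add: ss algebra_simps)
  qed
  then show ?thesis using x y meas by simp
qed

end

theorem proposition3p14:
  fixes mult :: "'q \<Rightarrow> 'q \<Rightarrow> 'q" and one :: 'q and smult :: "'k::field \<Rightarrow> 'q \<Rightarrow> 'q"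
    and es :: "'q list"
  assumes "quantity_space mult one smult"
    and "is_basis mult one smult es"
  shows "(\<forall>x y. q_measure mult one smult es (mult x y) =
                q_measure mult one smult es x * q_measure mult one smult es y)
       \<and> (\<forall>x. q_measure mult one smult es x \<noteq> 0 \<longrightarrow>
                q_invertible mult one x \<and>
                q_measure mult one smult es (q_inv mult one x) =
                  inverse (q_measure mult one smult es x))
       \<and> (\<forall>l x. q_measure mult one smult es (smult l x) =
                l * q_measure mult one smult es x)
       \<and> (\<forall>x y. q_sim smult x y \<longrightarrow>
                q_measure mult one smult es (q_add smult x y) =
                  q_measure mult one smult es x + q_measure mult one smult es y)"
proof -
  have "qsp mult one smult es"
    using assms unfolding qsp_def quantity_space_def scalable_monoid_def by blast
  then interpret qsp mult one smult es .
  show ?thesis using part1 part2 part3 part4 by blast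
qed

end
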